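(* Let $(\mathcal H,X)$ be a stable arrangement of $n$ hyperplanes in $\mathbb R^d$, $\mathcal C=\mathrm{code}(\mathcal H,X)$, and let $F\in\Gamma(\mathcal C)$ be a face with $|F|<n$ such that the region $R_F$ is nonempty. Then $(\{H_i^+\cap R_F\}_{i\notin\underline F},R_F)$ is a stable arrangement. Moreover, the nerve of $\{H_i^+\cap R_F,\ H_i^-\cap R_F\}_{i\in[n]\setminus\underline F}$ (vertex $i$ for $H_i^+\cap R_F$, vertex $\bar i$ for $H_i^-\cap R_F$) is either collapsible or equal to $\Gamma(2^{[n]\setminus\underline F})$.
   Context: An oriented affine hyperplane is $H_i=\{x:w_i\cdot x-h_i=0\}$ with $w_i\neq0$, $H_i^+=\{w_i\cdot x-h_i>0\}$, $H_i^-=\{w_i\cdot x-h_i<0\}$. For hyperplanes $\{H_i\}_{i\in I}$ and open convex $Y$, the atom of $\sigma\subseteq I$ is $\bigl(\bigcap_{i\in\sigma}(H_i^+\cap Y)\bigr)\setminus\bigcup_{j\in I\setminus\sigma}H_j^+$ (for $\sigma=\emptyset$: $Y\setminus\bigcup_iH_i^+$), the code is the set of $\sigma$ with nonempty atom, and the arrangement is stable if $Y$ is open convex and for every $\sigma\subseteq I$ with $Y\cap\bigcap_{i\in\sigma}H_i\neq\emptyset$, $\dim\bigcap_{i\in\sigma}H_i=d-|\sigma|$. The polar complex $\Gamma(\mathcal C)$ is the simplicial complex on $[n]\sqcup\{\bar1,\dots,\bar n\}$ of all subsets of $\Sigma(\sigma)=\sigma\sqcup\{\bar i:i\notin\sigma\}$,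 $\sigma\in\mathcal C$. A face $F$ is written $F=F^+\sqcup\{\bar j:j\in F^-\}$ with $F^\pm\subseteq[n]$; its support is $\underline F=F^+\cup F^-$, and $R_F=X\cap\bigcap_{i\in F^+}H_i^+\cap\bigcap_{j\in F^-}H_j^-$. For $S\subseteq[n]$, $\Gamma(2^S)$ is the complex on $S\sqcup\{\bar i:i\in S\}$ whose faces are the subsets containing no pair $\{i,\bar i\}$. The nerve of $\{V_v\}_{v\in V}$ is $\{S\subseteq V:\bigcap_{v\in S}V_v\ne\emptyset\}$. A free pair in a complex $\Delta$ is $(\sigma,\tau)$ with $\tau$ a facet, $\sigma\subsetneq\tau$, $\sigma$ in no other facet; collapsing along $\sigma$ gives $\{\nu\in\Delta:\nu\not\supseteq\sigma\}$; $\Delta$ is collapsible if finitely many collapses yield the void complex $\{\}$. *)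

theory Defs
  imports "HOL-Analysis.Analysis"
begin

definition hyp :: "(nat \<Rightarrow> 'a::euclidean_space) \<Rightarrow> (nat \<Rightarrow> real) \<Rightarrow> nat \<Rightarrow> 'a set" where
  "hyp w h i = {x. w i \<bullet> x - h i = 0}"

definition hplus :: "(nat \<Rightarrow> 'a::euclidean_space) \<Rightarrow> (nat \<Rightarrow> real) \<Rightarrow> nat \<Rightarrow> 'a set" where
  "hplus w h i = {x. w i \<bullet> x - h i > 0}"

definition hminus :: "(nat \<Rightarrow> 'a::euclidean_space) \<Rightarrow> (nat \<Rightarrow> real) \<Rightarrow> nat \<Rightarrow> 'a set" where
  "hminus w h i = {x. w i \<bullet> x - h i < 0}"

definition stable_arr ::
  "nat set \<Rightarrow> (nat \<Rightarrow> 'a::euclidean_space) \<Rightarrow> (nat \<Rightarrow> real) \<Rightarrow> 'a set \<Rightarrow> bool" where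
  "stable_arr I w h Y \<longleftrightarrow>
     (\<forall>i\<in>I. w i \<noteq> 0) \<and> open Y \<and> convex Y \<and>
     (\<forall>\<sigma>. \<sigma> \<subseteq> I \<longrightarrow> Y \<inter> (\<Inter>i\<in>\<sigma>. hyp w h i) \<noteq> {} \<longrightarrow>
        aff_dim (\<Inter>i\<in>\<sigma>. hyp w h i) = int DIM('a) - int (card \<sigma>))"

definition atom ::
  "nat set \<Rightarrow> (nat \<Rightarrow> 'a::euclidean_space) \<Rightarrow> (nat \<Rightarrow> real) \<Rightarrow> 'a set \<Rightarrow> nat set \<Rightarrow> 'a set" where
  "atom I w h Y \<sigma> = (Y \<inter> (\<Inter>i\<in>\<sigma>. hplus w h i)) - (\<Union>j\<in>I - \<sigma>. hplus w h j)"

definition code ::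
  "nat set \<Rightarrow> (nat \<Rightarrow> 'a::euclidean_space) \<Rightarrow> (nat \<Rightarrow> real) \<Rightarrow> 'a set \<Rightarrow> nat set set" where
  "code I w h Y = {\<sigma>. \<sigma> \<subseteq> I \<and> atom I w h Y \<sigma> \<noteq> {}}"

text \<open>Polar complex. Vertex i is Inl i, vertex bar i is Inr i.\<close>

definition Sigma_polar :: "nat set \<Rightarrow> nat set \<Rightarrow> (nat + nat) set" where
  "Sigma_polar I \<sigma> = Inl ` \<sigma> \<union> Inr ` (I - \<sigma>)"

definition polar_complex :: "nat set \<Rightarrow> nat set set \<Rightarrow> (nat + nat) set set" where
  "polar_complex I C = {F. \<exists>\<sigma>\<in>C. F \<subseteq> Sigma_polar I \<sigma>}"

definition fplus :: "(nat + nat) set \<Rightarrow> nat set" where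
  "fplus F = {i. Inl i \<in> F}"

definition fminus :: "(nat + nat) set \<Rightarrow> nat set" where
  "fminus F = {i. Inr i \<in> F}"

definition supp :: "(nat + nat) set \<Rightarrow> nat set" where
  "supp F = fplus F \<union> fminus F"

definition region ::
  "(nat \<Rightarrow> 'a::euclidean_space) \<Rightarrow> (nat \<Rightarrow> real) \<Rightarrow> 'a set \<Rightarrow> (nat + nat) set \<Rightarrow> 'a set" where
  "region w h X F = X \<inter> (\<Inter>i\<in>fplus F. hplus w h i) \<inter> (\<Inter>j\<in>fminus F. hminus w h j)"

text \<open>Gamma(2^S): subsets of S \<squnion> bar S containing no pair {i, bar i}.\<close>

definition full_polar :: "nat set \<Rightarrow> (nat + nat) set set" where
  "full_polar S = {G. G \<subseteq> Inl ` S \<union> Inr ` S \<and> (\<forall>i. \<not> (Inl i \<in> G \<and> Inr i \<in> G))}"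

definition nerve :: "'v set \<Rightarrow> ('v \<Rightarrow> 'b set) \<Rightarrow> 'v set set" where
  "nerve V U = {S. S \<subseteq> V \<and> (\<Inter>v\<in>S. U v) \<noteq> {}}"

definition facet :: "'v set set \<Rightarrow> 'v set \<Rightarrow> bool" where
  "facet \<Delta> \<tau> \<longleftrightarrow> \<tau> \<in> \<Delta> \<and> (\<forall>\<rho>\<in>\<Delta>. \<tau> \<subseteq> \<rho> \<longrightarrow> \<rho> = \<tau>)"

definition free_pair :: "'v set set \<Rightarrow> 'v set \<Rightarrow> 'v set \<Rightarrow> bool" where
  "free_pair \<Delta> \<sigma> \<tau> \<longleftrightarrow> facet \<Delta> \<tau> \<and> \<sigma> \<subset> \<tau> \<and>
     (\<forall>\<rho>. facet \<Delta> \<rho> \<and> \<sigma> \<subseteq> \<rho> \<longrightarrow> \<rho> = \<tau>)"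

definition collapse :: "'v set set \<Rightarrow> 'v set \<Rightarrow> 'v set set" where
  "collapse \<Delta> \<sigma> = {\<nu>\<in>\<Delta>. \<not> \<sigma> \<subseteq> \<nu>}"

inductive collapsible :: "'v set set \<Rightarrow> bool" where
  void: "collapsible {}"
| step: "free_pair \<Delta> \<sigma> \<tau> \<Longrightarrow> collapsible (collapse \<Delta> \<sigma>) \<Longrightarrow> collapsible \<Delta>"

end

theory Submission
  imports Defs
begin


lemma link_collapsible:
  assumes "collapsible B"
  shows "B = {G. v \<notin> G \<and> insert v G \<in> K} \<Longrightarrow> collapsible {G\<in>K. v \<notin> G} \<Longrightarrow> collapsible K"
  using assms
proof (induction B arbitrary: K rule: collapsible.induct)
  case void
  have "K = {G\<in>K. v \<notin> G}"
  proof (auto)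
    fix G assume "G \<in> K" "v \<in> G"
    then have "insert v (G - {v}) \<in> K" by (simp add: insert_absorb)
    then have "G - {v} \<in> ({}::'a set set)" using void(1) by blast
    then show False by simp
  qed
  with void show ?case by simp
next
  case (step B \<sigma> \<tau>)
  have tB: "\<tau> \<in> B" and tmax: "\<And>\<rho>. \<rho> \<in> B \<Longrightarrow> \<tau> \<subseteq> \<rho> \<Longrightarrow> \<rho> = \<tau>"
    and st: "\<sigma> \<subset> \<tau>" and uniq: "\<And>\<rho>. facet B \<rho> \<Longrightarrow> \<sigma> \<subseteq> \<rho> \<Longrightarrow> \<rho> = \<tau>"
    using step(1) unfolding free_pair_def facet_def by auto
  have vt: "v \<notin> \<tau>" "insert v \<tau> \<in> K" using tB step(4) by auto
  have vs: "v \<notin> \<sigma>" using vt st by auto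
  have fp: "free_pair K (insert v \<sigma>) (insert v \<tau>)"
    unfolding free_pair_def
  proof (intro conjI allI impI)
    show "facet K (insert v \<tau>)" unfolding facet_def
    proof (intro conjI ballI impI)
      show "insert v \<tau> \<in> K" by fact
      fix \<rho> assume r: "\<rho> \<in> K" "insert v \<tau> \<subseteq> \<rho>"
      have "insert v (\<rho> - {v}) = \<rho>" using r by auto
      then have "\<rho> - {v} \<in> B" using r step(4) by auto
      then have "\<rho> - {v} = \<tau>" using tmax r vt by auto
      then show "\<rho> = insert v \<tau>" using r by auto
    qed
    show "insert v \<sigma> \<subset> insert v \<tau>" using st vt vs by auto
    fix \<rho> assume r: "facet K \<rho> \<and> insert v \<sigma> \<subseteq> \<rho>"
    have rK: "\<rho> \<in> K" and rmax: "\<And>\<rho>'. \<rho>' \<in> K \<Longrightarrow> \<rho> \<subseteq> \<rho>' \<Longrightarrow> \<rho>' = \<rho>"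
      using r unfolding facet_def by auto
    have e: "insert v (\<rho> - {v}) = \<rho>" using r by auto
    then have rB: "\<rho> - {v} \<in> B" using rK step(4) by auto
    have "facet B (\<rho> - {v})" unfolding facet_def
    proof (intro conjI ballI impI)
      show "\<rho> - {v} \<in> B" by fact
      fix \<rho>' assume "\<rho>' \<in> B" "\<rho> - {v} \<subseteq> \<rho>'"
      then have "insert v \<rho>' \<in> K" "v \<notin> \<rho>'" "\<rho> \<subseteq> insert v \<rho>'" using step(4) by auto
      then have "insert v \<rho>' = \<rho>" using rmax by blast
      then show "\<rho>' = \<rho> - {v}" using \<open>v \<notin> \<rho>'\<close> by auto
    qed
    moreover have "\<sigma> \<subseteq> \<rho> - {v}" using r vs by auto
    ultimately have "\<rho> - {v} = \<tau>" using uniq by blast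
    then show "\<rho> = insert v \<tau>" using e by auto
  qed
  have "collapse B \<sigma> = {G. v \<notin> G \<and> insert v G \<in> collapse K (insert v \<sigma>)}"
    using step(4) vs unfolding collapse_def by auto
  moreover have "{G \<in> collapse K (insert v \<sigma>). v \<notin> G} = {G\<in>K. v \<notin> G}"
    unfolding collapse_def by auto
  ultimately have "collapsible (collapse K (insert v \<sigma>))"
    using step(3)[of "collapse K (insert v \<sigma>)"] step(5) by simp
  then show ?case using fp collapsible.step by blast
qed

lemma cone_collapsible:
  "finite A \<Longrightarrow> (\<forall>G\<in>A. \<forall>G'. G' \<subseteq> G \<longrightarrow> G' \<in> A) \<Longrightarrow> {} \<in> A \<Longrightarrow> (\<forall>G\<in>A. v \<notin> G)
   \<Longrightarrow> collapsible (A \<union> insert v ` A)"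
proof (induction "card A" arbitrary: A rule: less_induct)
  case less
  show ?case
  proof (cases "A = {{}}")
    case True
    have K: "A \<union> insert v ` A = {{}, {v}}" using True by auto
    have "free_pair {{}, {v}} {} {v}"
      unfolding free_pair_def facet_def by auto
    moreover have "collapse {{}, {v}} {} = {}" unfolding collapse_def by auto
    ultimately show ?thesis using K collapsible.intros by metis
  next
    case False
    then obtain G where G: "G \<in> A" "G \<noteq> {}" using less(4) by blast
    obtain \<tau> where t: "\<tau> \<in> A" "G \<subseteq> \<tau>" and tmax: "\<forall>b\<in>A. \<tau> \<subseteq> b \<longrightarrow> \<tau> = b"
      using finite_has_maximal2[OF less(2) G(1)] by blast
    have tne: "\<tau> \<noteq> {}" using t G by auto
    have vt: "v \<notin> \<tau>" using less(5) t by auto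
    let ?K = "A \<union> insert v ` A"
    have fp: "free_pair ?K \<tau> (insert v \<tau>)"
      unfolding free_pair_def facet_def
    proof (intro conjI allI impI ballI)
      show "insert v \<tau> \<in> ?K" using t by auto
      fix \<rho> assume "\<rho> \<in> ?K" "insert v \<tau> \<subseteq> \<rho>"
      then show "\<rho> = insert v \<tau>" using tmax less(5) vt
        by (auto simp: subset_insert)
    next
      show "\<tau> \<subset> insert v \<tau>" using vt by auto
    next
      fix \<rho> assume r: "(\<rho> \<in> ?K \<and> (\<forall>\<rho>'\<in>?K. \<rho> \<subseteq> \<rho>' \<longrightarrow> \<rho>' = \<rho>)) \<and> \<tau> \<subseteq> \<rho>"
      show "\<rho> = insert v \<tau>"
      proof (cases "\<rho> \<in> A")
        case True
        then have "\<rho> = \<tau>" using tmax r by auto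
        moreover have "insert v \<tau> \<in> ?K" using t by auto
        ultimately show ?thesis using r by blast
      next
        case False
        then obtain G' where "G' \<in> A" "\<rho> = insert v G'" using r by auto
        then show ?thesis using r tmax less(5) vt by (auto simp: subset_insert)
      qed
    qed
    let ?A = "A - {\<tau>}"
    have e1: "\<forall>x\<in>A. (\<tau> \<subseteq> x \<longleftrightarrow> x = \<tau>)" using tmax by auto
    have e2: "\<forall>x\<in>A. (\<tau> \<subseteq> insert v x \<longleftrightarrow> x = \<tau>)" using tmax vt by (auto simp: subset_insert)
    have col: "collapse ?K \<tau> = ?A \<union> insert v ` ?A"
      unfolding collapse_def using e1 e2 by blast
    have "collapsible (?A \<union> insert v ` ?A)"
    proof (rule less(1))
      show "card ?A < card A" using t less(2) by (meson card_Diff1_less)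
      show "finite ?A" using less(2) by simp
      show "\<forall>G\<in>?A. \<forall>G'. G' \<subseteq> G \<longrightarrow> G' \<in> ?A" using less(3) e1 by blast
      show "{} \<in> ?A" using less(4) tne by simp
      show "\<forall>G\<in>?A. v \<notin> G" using less(5) by simp
    qed
    then show ?thesis using fp col collapsible.step by metis
  qed
qed



definition half :: "(nat \<Rightarrow> 'a::euclidean_space) \<Rightarrow> (nat \<Rightarrow> real) \<Rightarrow> nat + nat \<Rightarrow> 'a set" where
  "half w h v = (case v of Inl i \<Rightarrow> hplus w h i | Inr i \<Rightarrow> hminus w h i)"

definition Nv :: "(nat \<Rightarrow> 'a::euclidean_space) \<Rightarrow> (nat \<Rightarrow> real) \<Rightarrow> nat set \<Rightarrow> 'a set \<Rightarrow> (nat + nat) set set" where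
  "Nv w h S R = {G. G \<subseteq> Inl ` S \<union> Inr ` S \<and> R \<inter> (\<Inter>v\<in>G. half w h v) \<noteq> {}}"

lemma half_Inl[simp]: "half w h (Inl i) = hplus w h i" and half_Inr[simp]: "half w h (Inr i) = hminus w h i"
  by (simp_all add: half_def)

lemma open_hplus: "open (hplus w h i)"
  unfolding hplus_def by (intro open_Collect_less continuous_intros)
lemma open_hminus: "open (hminus w h i)"
  unfolding hminus_def by (intro open_Collect_less continuous_intros)
lemma convex_hplus: "convex (hplus w h i)"
proof -
  have "hplus w h i = {x. inner (w i) x > h i}" unfolding hplus_def by auto
  then show ?thesis using convex_halfspace_gt by metis
qed
lemma convex_hminus: "convex (hminus w h i)"
proof -
  have "hminus w h i = {x. inner (w i) x < h i}" unfolding hminus_def by auto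
  then show ?thesis using convex_halfspace_lt by metis
qed
lemma convex_hyp: "convex (hyp w h i)"
proof -
  have "hyp w h i = {x. inner (w i) x = h i}" unfolding hyp_def by auto
  then show ?thesis using convex_hyperplane by metis
qed

lemma stable_mono:
  assumes "stable_arr S w h R" "S' \<subseteq> S" "R' \<subseteq> R" "open R'" "convex R'"
  shows "stable_arr S' w h R'"
  unfolding stable_arr_def
proof (intro conjI allI impI ballI)
  fix \<sigma> assume s: "\<sigma> \<subseteq> S'" "R' \<inter> (\<Inter>i\<in>\<sigma>. hyp w h i) \<noteq> {}"
  then have "\<sigma> \<subseteq> S" "R \<inter> (\<Inter>i\<in>\<sigma>. hyp w h i) \<noteq> {}" using assms(2,3) by auto
  then show "aff_dim (\<Inter>i\<in>\<sigma>. hyp w h i) = int DIM('a) - int (card \<sigma>)"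
    using assms(1) unfolding stable_arr_def by blast
qed (use assms in \<open>auto simp: stable_arr_def\<close>)

lemma Nv_full: "G \<in> Nv w h S R \<Longrightarrow> G \<in> full_polar S"
proof -
  have "\<not> (Inl i \<in> G \<and> Inr i \<in> G)" if GN: "G \<in> Nv w h S R" for i
  proof
    assume a: "Inl i \<in> G \<and> Inr i \<in> G"
    obtain x where "x \<in> R \<inter> (\<Inter>v\<in>G. half w h v)" using GN unfolding Nv_def by blast
    then have "x \<in> hplus w h i" "x \<in> hminus w h i" using a by (metis INT_E Int_iff half_Inl half_Inr)+
    then show False unfolding hplus_def hminus_def by auto
  qed
  then show "G \<in> Nv w h S R \<Longrightarrow> G \<in> full_polar S" unfolding full_polar_def Nv_def by auto
qed

lemma full_in_Nv:
  fixes w :: "nat \<Rightarrow> 'a::euclidean_space"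
  assumes fin: "finite S" and st: "stable_arr S w h R" and pR: "p \<in> R"
    and pL: "\<forall>i\<in>S. p \<in> hyp w h i" and G: "G \<in> full_polar S"
  shows "G \<in> Nv w h S R"
proof -
  have ad: "aff_dim (\<Inter>i\<in>\<sigma>. hyp w h i) = int DIM('a) - int (card \<sigma>)" if "\<sigma> \<subseteq> S" for \<sigma>
  proof -
    have "p \<in> R \<inter> (\<Inter>i\<in>\<sigma>. hyp w h i)" using pR pL that by auto
    then show ?thesis using st that unfolding stable_arr_def by blast
  qed
  have "\<forall>i\<in>S. \<exists>q. (\<forall>k\<in>S-{i}. q \<in> hyp w h k) \<and> q \<notin> hyp w h i"
  proof
    fix i assume i: "i \<in> S"
    have c: "int (card (S - {i})) = int (card S) - 1" using i fin
    proof -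
      have "card S \<ge> 1" using i fin by (metis One_nat_def Suc_leI card_gt_0_iff empty_iff)
      then show ?thesis using i fin by (simp add: card_Diff_singleton of_nat_diff)
    qed
    have "(\<Inter>k\<in>S-{i}. hyp w h k) \<noteq> (\<Inter>k\<in>S. hyp w h k)"
      using ad[of "S-{i}"] ad[of S] c by auto
    moreover have "(\<Inter>k\<in>S. hyp w h k) \<subseteq> (\<Inter>k\<in>S-{i}. hyp w h k)" by auto
    ultimately obtain q where "q \<in> (\<Inter>k\<in>S-{i}. hyp w h k)" "q \<notin> (\<Inter>k\<in>S. hyp w h k)" by blast
    then show "\<exists>q. (\<forall>k\<in>S-{i}. q \<in> hyp w h k) \<and> q \<notin> hyp w h i" by blast
  qed
  then obtain q where q: "\<forall>i\<in>S. (\<forall>k\<in>S-{i}. q i \<in> hyp w h k) \<and> q i \<notin> hyp w h i" by metis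
  define u where "u i = q i - p" for i
  define e where "e i = (if Inl i \<in> G then 1 else -1::real)" for i
  define v where "v = (\<Sum>i\<in>S. (e i / (w i \<bullet> u i)) *\<^sub>R u i)"
  have wu: "w k \<bullet> u i = 0" if "k \<in> S" "i \<in> S" "k \<noteq> i" for k i
    using q that pL unfolding u_def hyp_def by (auto simp: inner_diff_right)
  have wu2: "w i \<bullet> u i \<noteq> 0" if "i \<in> S" for i
    using q that pL unfolding u_def hyp_def by (auto simp: inner_diff_right)
  have wv: "w k \<bullet> v = e k" if k: "k \<in> S" for k
  proof -
    have "w k \<bullet> v = (\<Sum>i\<in>S. (e i / (w i \<bullet> u i)) * (w k \<bullet> u i))"
      unfolding v_def by (simp add: inner_sum_right)
    also have "\<dots> = (\<Sum>i\<in>S. if i = k then e k else 0)"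
      by (rule sum.cong) (use wu wu2 k in auto)
    also have "\<dots> = e k" using k fin by simp
    finally show ?thesis .
  qed
  have "open R" using st unfolding stable_arr_def by auto
  then obtain r where r: "r > 0" "ball p r \<subseteq> R" using pR open_contains_ball by blast
  define t where "t = r / (2 * (norm v + 1))"
  have "norm v + 1 > 0" by (simp add: add_nonneg_pos)
  then have tpos: "t > 0" using r unfolding t_def by simp
  have "t * norm v < r"
  proof -
    have "t * norm v \<le> t * (norm v + 1)" using tpos by simp
    also have "\<dots> = r / 2" unfolding t_def using \<open>norm v + 1 > 0\<close> by (simp add: field_simps)
    finally show ?thesis using r by simp
  qed
  then have zR: "p + t *\<^sub>R v \<in> R" using r tpos by (auto simp: dist_norm)
  have zk: "w k \<bullet> (p + t *\<^sub>R v) - h k = t * e k" if "k \<in> S" for k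
    using pL that wv unfolding hyp_def by (auto simp: inner_add_right)
  have Gs: "G \<subseteq> Inl ` S \<union> Inr ` S" and np: "\<And>i. \<not> (Inl i \<in> G \<and> Inr i \<in> G)"
    using G unfolding full_polar_def by auto
  have "p + t *\<^sub>R v \<in> (\<Inter>v\<in>G. half w h v)"
  proof
    fix x assume x: "x \<in> G"
    show "p + t *\<^sub>R v \<in> half w h x"
    proof (cases x)
      case (Inl k)
      then have "k \<in> S" "e k = 1" using x Gs e_def by auto
      then show ?thesis using zk[of k] tpos Inl by (simp add: hplus_def)
    next
      case (Inr k)
      then have "k \<in> S" "e k = -1" using x Gs e_def np by auto
      then show ?thesis using zk[of k] tpos Inr by (simp add: hminus_def)
    qed
  qed
  then show ?thesis unfolding Nv_def using Gs zR by blast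
qed



lemma main:
  fixes w :: "nat \<Rightarrow> 'a::euclidean_space"
  assumes "finite S"
  shows "stable_arr S w h R \<Longrightarrow> R \<inter> (\<Inter>i\<in>S. hyp w h i) = {} \<Longrightarrow> collapsible (Nv w h S R)"
  using assms
proof (induction S arbitrary: R rule: finite_induct)
  case empty
  then have "R = {}" by simp
  then show ?case by (simp add: Nv_def collapsible.void)
next
  case (insert j S)
  define K where "K = Nv w h (insert j S) R"
  define Rp where "Rp = R \<inter> hplus w h j"
  define Rm where "Rm = R \<inter> hminus w h j"
  define L where "L = (\<Inter>i\<in>S. hyp w h i)"
  have opR: "open R" and cvR: "convex R" using insert.prems unfolding stable_arr_def by auto
  have stp: "stable_arr S w h Rp" unfolding Rp_def
    by (rule stable_mono[OF insert.prems(1)]) (auto intro: open_Int convex_Int opR cvR open_hplus convex_hplus)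
  have stm: "stable_arr S w h Rm" unfolding Rm_def
    by (rule stable_mono[OF insert.prems(1)]) (auto intro: open_Int convex_Int opR cvR open_hminus convex_hminus)
  have st0: "stable_arr S w h R"
    by (rule stable_mono[OF insert.prems(1)]) (auto intro: opR cvR)
  have IHp: "Rp \<inter> L = {} \<Longrightarrow> collapsible (Nv w h S Rp)" using insert.IH stp L_def by blast
  have IHm: "Rm \<inter> L = {} \<Longrightarrow> collapsible (Nv w h S Rm)" using insert.IH stm L_def by blast
  have IH0: "R \<inter> L = {} \<Longrightarrow> collapsible (Nv w h S R)" using insert.IH st0 L_def by blast
  have empL: "R \<inter> L \<inter> hyp w h j = {}" using insert.prems(2) unfolding L_def by auto
  have noboth: "\<not> (Rp \<inter> L \<noteq> {} \<and> Rm \<inter> L \<noteq> {})"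
  proof
    assume "Rp \<inter> L \<noteq> {} \<and> Rm \<inter> L \<noteq> {}"
    then obtain x y where x: "x \<in> R" "x \<in> L" "w j \<bullet> x - h j > 0" and y: "y \<in> R" "y \<in> L" "w j \<bullet> y - h j < 0"
      unfolding Rp_def Rm_def hplus_def hminus_def by blast
    define a where "a = w j \<bullet> x - h j"
    define b where "b = w j \<bullet> y - h j"
    define t where "t = a / (a - b)"
    have ab: "a > 0" "b < 0" using x y a_def b_def by auto
    then have t01: "0 \<le> t" "t \<le> 1" unfolding t_def by (auto simp: field_simps)
    have cv: "convex (R \<inter> L)" unfolding L_def by (intro convex_Int cvR convex_INT ballI convex_hyp)
    have zin: "(1 - t) *\<^sub>R x + t *\<^sub>R y \<in> R \<inter> L"
      using convexD[OF cv, of x y "1 - t" t] x y t01 by auto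
    have "w j \<bullet> ((1 - t) *\<^sub>R x + t *\<^sub>R y) - h j = (1 - t) * a + t * b"
      unfolding a_def b_def by (simp add: inner_add_right algebra_simps)
    also have "\<dots> = 0" using ab unfolding t_def by (simp add: field_simps)
    finally have "(1 - t) *\<^sub>R x + t *\<^sub>R y \<in> hyp w h j" unfolding hyp_def by simp
    then show False using zin empL by blast
  qed
  have VS: "G \<subseteq> Inl ` S \<union> Inr ` S"
    if "G \<subseteq> Inl ` (insert j S) \<union> Inr ` (insert j S)" "Inl j \<notin> G" "Inr j \<notin> G" for G
    using that by blast
  have jS: "Inl j \<notin> G" "Inr j \<notin> G" if "G \<subseteq> Inl ` S \<union> Inr ` S" for G
    using that insert.hyps(2) by auto
  have bothE: "(\<Inter>v\<in>G. half w h v) = {}" if "Inl j \<in> G" "Inr j \<in> G" for G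
  proof -
    have "(\<Inter>v\<in>G. half w h v) \<subseteq> hplus w h j \<inter> hminus w h j"
      using that by (metis INT_lower Int_greatest half_Inl half_Inr)
    moreover have "hplus w h j \<inter> hminus w h j = {}" unfolding hplus_def hminus_def by auto
    ultimately show ?thesis by blast
  qed
  have linkm: "{G. Inr j \<notin> G \<and> insert (Inr j) G \<in> K} = Nv w h S Rm"
  proof (intro set_eqI iffI)
    fix G assume "G \<in> {G. Inr j \<notin> G \<and> insert (Inr j) G \<in> K}"
    then have a: "Inr j \<notin> G" "G \<subseteq> Inl ` (insert j S) \<union> Inr ` (insert j S)"
      "R \<inter> (hminus w h j \<inter> (\<Inter>v\<in>G. half w h v)) \<noteq> {}" unfolding K_def Nv_def by auto
    have "Inl j \<notin> G" using a(3) bothE[of "insert (Inr j) G"] by auto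
    then show "G \<in> Nv w h S Rm" using a VS unfolding Nv_def Rm_def by (auto simp: Int_assoc)
  next
    fix G assume a: "G \<in> Nv w h S Rm"
    then have "G \<subseteq> Inl ` S \<union> Inr ` S" unfolding Nv_def by auto
    then show "G \<in> {G. Inr j \<notin> G \<and> insert (Inr j) G \<in> K}"
      using a jS unfolding K_def Nv_def Rm_def by (auto simp: Int_assoc)
  qed
  have linkp: "{G. Inl j \<notin> G \<and> insert (Inl j) G \<in> K} = Nv w h S Rp"
  proof (intro set_eqI iffI)
    fix G assume "G \<in> {G. Inl j \<notin> G \<and> insert (Inl j) G \<in> K}"
    then have a: "Inl j \<notin> G" "G \<subseteq> Inl ` (insert j S) \<union> Inr ` (insert j S)"
      "R \<inter> (hplus w h j \<inter> (\<Inter>v\<in>G. half w h v)) \<noteq> {}" unfolding K_def Nv_def by auto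
    have "Inr j \<notin> G" using a(3) bothE[of "insert (Inl j) G"] by auto
    then show "G \<in> Nv w h S Rp" using a VS unfolding Nv_def Rp_def by (auto simp: Int_assoc)
  next
    fix G assume a: "G \<in> Nv w h S Rp"
    then have "G \<subseteq> Inl ` S \<union> Inr ` S" unfolding Nv_def by auto
    then show "G \<in> {G. Inl j \<notin> G \<and> insert (Inl j) G \<in> K}"
      using a jS unfolding K_def Nv_def Rp_def by (auto simp: Int_assoc)
  qed
  define K1 where "K1 = {G\<in>K. Inr j \<notin> G}"
  define K2 where "K2 = {G\<in>K. Inl j \<notin> G}"
  have KnotR: "Inr j \<notin> G" if "insert (Inl j) G \<in> K" for G
    using that bothE[of "insert (Inl j) G"] unfolding K_def Nv_def by auto
  have KnotL: "Inl j \<notin> G" if "insert (Inr j) G \<in> K" for G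
    using that bothE[of "insert (Inr j) G"] unfolding K_def Nv_def by auto
  have "{G. Inl j \<notin> G \<and> insert (Inl j) G \<in> K1} = {G. Inl j \<notin> G \<and> insert (Inl j) G \<in> K}"
    unfolding K1_def using KnotR by blast
  then have linkp1: "{G. Inl j \<notin> G \<and> insert (Inl j) G \<in> K1} = Nv w h S Rp"
    using linkp by simp
  have "{G. Inr j \<notin> G \<and> insert (Inr j) G \<in> K2} = {G. Inr j \<notin> G \<and> insert (Inr j) G \<in> K}"
    unfolding K2_def using KnotL by blast
  then have linkm2: "{G. Inr j \<notin> G \<and> insert (Inr j) G \<in> K2} = Nv w h S Rm"
    using linkm by simp
  have base1: "{G\<in>K1. Inl j \<notin> G} = Nv w h S R"
  proof (intro set_eqI iffI)
    fix G assume "G \<in> {G\<in>K1. Inl j \<notin> G}"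
    then show "G \<in> Nv w h S R" using VS unfolding K1_def K_def Nv_def by auto
  next
    fix G assume a: "G \<in> Nv w h S R"
    then have "G \<subseteq> Inl ` S \<union> Inr ` S" unfolding Nv_def by auto
    then show "G \<in> {G\<in>K1. Inl j \<notin> G}" using a jS unfolding K1_def K_def Nv_def by auto
  qed
  have fullfin: "finite (full_polar S)"
  proof (rule finite_subset)
    show "full_polar S \<subseteq> Pow (Inl ` S \<union> Inr ` S)" unfolding full_polar_def by auto
    show "finite (Pow (Inl ` S \<union> Inr ` S))" using insert.hyps(1) by simp
  qed
  have fulldown: "\<forall>G\<in>full_polar S. \<forall>G'. G' \<subseteq> G \<longrightarrow> G' \<in> full_polar S"
    unfolding full_polar_def by blast
  have fullemp: "{} \<in> full_polar S" unfolding full_polar_def by auto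
  have fullj: "Inl j \<notin> G" "Inr j \<notin> G" if "G \<in> full_polar S" for G
    using that jS unfolding full_polar_def by auto
  have Kfull: "G \<in> full_polar (insert j S)" if "G \<in> K" for G using that Nv_full unfolding K_def by blast
  have Kdown: "G \<in> K" if "G' \<in> K" "G \<subseteq> G'" for G G'
  proof -
    have "R \<inter> (\<Inter>v\<in>G'. half w h v) \<subseteq> R \<inter> (\<Inter>v\<in>G. half w h v)" using that(2) by auto
    then show ?thesis using that unfolding K_def Nv_def by auto
  qed
  have fullsub: "G - {v} \<in> full_polar S" if "G \<in> full_polar (insert j S)" "Inl j \<notin> G - {v}" "Inr j \<notin> G - {v}" for G v
    using that unfolding full_polar_def by blast
  show ?case
  proof (cases "Rp \<inter> L = {}")
    case Cp: True
    show ?thesis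
    proof (cases "Rm \<inter> L = {}")
      case Cm: True
      have "R \<inter> L = {}"
      proof (rule ccontr)
        assume "R \<inter> L \<noteq> {}"
        then obtain x where "x \<in> R" "x \<in> L" by blast
        moreover have "x \<notin> hyp w h j" using empL calculation by blast
        ultimately have "x \<in> Rp \<inter> L \<or> x \<in> Rm \<inter> L" unfolding Rp_def Rm_def hyp_def hplus_def hminus_def by auto
        then show False using Cp Cm by blast
      qed
      then have c0: "collapsible {G\<in>K1. Inl j \<notin> G}" using IH0 base1 by simp
      have "collapsible K1" using link_collapsible[OF IHp[OF Cp] linkp1[symmetric] c0] .
      then show ?thesis using link_collapsible[OF IHm[OF Cm] linkm[symmetric]] K_def K1_def by simp
    next
      case Cm: False
      then obtain x where x: "x \<in> Rm" "x \<in> L" by blast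
      have Cp': "Rp \<inter> L = {}" by fact
      have fN: "G \<in> Nv w h S Rm" if "G \<in> full_polar S" for G
        using full_in_Nv[OF insert.hyps(1) stm x(1)] x(2) that unfolding L_def by blast
      have K2eq: "K2 = full_polar S \<union> insert (Inr j) ` full_polar S"
      proof (intro set_eqI iffI)
        fix G assume "G \<in> K2"
        then have GK: "G \<in> K" "Inl j \<notin> G" unfolding K2_def by auto
        have Gf: "G \<in> full_polar (insert j S)" using Kfull GK by blast
        show "G \<in> full_polar S \<union> insert (Inr j) ` full_polar S"
        proof (cases "Inr j \<in> G")
          case True
          have "G - {Inr j} \<in> full_polar S" using fullsub[OF Gf] GK by auto
          moreover have "G = insert (Inr j) (G - {Inr j})" using True by auto
          ultimately show ?thesis by blast
        next
          case False
          have "G - {Inr j} \<in> full_polar S" using fullsub[OF Gf] GK by auto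
          then show ?thesis using False by auto
        qed
      next
        fix G assume "G \<in> full_polar S \<union> insert (Inr j) ` full_polar S"
        then obtain G' where G': "G' \<in> full_polar S" "G = G' \<or> G = insert (Inr j) G'" by blast
        have "insert (Inr j) G' \<in> K" using fN[OF G'(1)] linkm by blast
        moreover have "G \<subseteq> insert (Inr j) G'" using G' by auto
        ultimately have "G \<in> K" using Kdown by blast
        moreover have "Inl j \<notin> G" using G' fullj by auto
        ultimately show "G \<in> K2" unfolding K2_def by simp
      qed
      have "collapsible K2" unfolding K2eq
        by (rule cone_collapsible[OF fullfin fulldown fullemp]) (use fullj in blast)
      then show ?thesis using link_collapsible[OF IHp[OF Cp] linkp[symmetric]] K_def K2_def by simp
    qed
  next
    case Cp: False
    then obtain x where x: "x \<in> Rp" "x \<in> L" by blast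
    have Cm: "Rm \<inter> L = {}" using noboth Cp by blast
    have fN: "G \<in> Nv w h S Rp" if "G \<in> full_polar S" for G
      using full_in_Nv[OF insert.hyps(1) stp x(1)] x(2) that unfolding L_def by blast
    have K1eq: "K1 = full_polar S \<union> insert (Inl j) ` full_polar S"
    proof (intro set_eqI iffI)
      fix G assume "G \<in> K1"
      then have GK: "G \<in> K" "Inr j \<notin> G" unfolding K1_def by auto
      have Gf: "G \<in> full_polar (insert j S)" using Kfull GK by blast
      show "G \<in> full_polar S \<union> insert (Inl j) ` full_polar S"
      proof (cases "Inl j \<in> G")
        case True
        have "G - {Inl j} \<in> full_polar S" using fullsub[OF Gf] GK by auto
        moreover have "G = insert (Inl j) (G - {Inl j})" using True by auto
        ultimately show ?thesis by blast
      next
        case False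
        have "G - {Inl j} \<in> full_polar S" using fullsub[OF Gf] GK by auto
        then show ?thesis using False by auto
      qed
    next
      fix G assume "G \<in> full_polar S \<union> insert (Inl j) ` full_polar S"
      then obtain G' where G': "G' \<in> full_polar S" "G = G' \<or> G = insert (Inl j) G'" by blast
      have "insert (Inl j) G' \<in> K" using fN[OF G'(1)] linkp by blast
      moreover have "G \<subseteq> insert (Inl j) G'" using G' by auto
      ultimately have "G \<in> K" using Kdown by blast
      moreover have "Inr j \<notin> G" using G' fullj by auto
      ultimately show "G \<in> K1" unfolding K1_def by simp
    qed
    have "collapsible K1" unfolding K1eq
      by (rule cone_collapsible[OF fullfin fulldown fullemp]) (use fullj in blast)
    then show ?thesis using link_collapsible[OF IHm[OF Cm] linkm[symmetric]] K_def K1_def by simp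
  qed
qed



theorem proposition3p7:
  fixes w :: "nat \<Rightarrow> 'a::euclidean_space" and h :: "nat \<Rightarrow> real"
    and X :: "'a set" and n :: nat and F :: "(nat + nat) set"
  assumes stable: "stable_arr {1..n} w h X"
    and face: "F \<in> polar_complex {1..n} (code {1..n} w h X)"
    and small: "card F < n"
    and nonempty: "region w h X F \<noteq> {}"
  shows "stable_arr ({1..n} - supp F) w h (region w h X F) \<and>
    (let S = {1..n} - supp F; R = region w h X F;
         N = nerve (Inl ` S \<union> Inr ` S)
               (\<lambda>v. case v of Inl i \<Rightarrow> hplus w h i \<inter> R | Inr i \<Rightarrow> hminus w h i \<inter> R)
     in collapsible N \<or> N = full_polar S)"
proof -
  define S where "S = {1..n} - supp F"
  define R where "R = region w h X F"
  obtain \<sigma> where "\<sigma> \<in> code {1..n} w h X" "F \<subseteq> Sigma_polar {1..n} \<sigma>" using face unfolding polar_complex_def by blast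
  moreover then have "\<sigma> \<subseteq> {1..n}" unfolding code_def by auto
  ultimately have Fs: "fplus F \<subseteq> {1..n}" "fminus F \<subseteq> {1..n}"
    unfolding Sigma_polar_def fplus_def fminus_def by auto
  then have fin: "finite (fplus F)" "finite (fminus F)" by (auto intro: finite_subset)
  have opX: "open X" and cvX: "convex X" using stable unfolding stable_arr_def by auto
  have opR: "open R" unfolding R_def region_def
    using fin opX by (intro open_Int open_INT ballI open_hplus open_hminus) auto
  have cvR: "convex R" unfolding R_def region_def
    using cvX by (intro convex_Int convex_INT ballI convex_hplus convex_hminus) auto
  have RX: "R \<subseteq> X" unfolding R_def region_def by auto
  have stR: "stable_arr S w h R"
    by (rule stable_mono[OF stable]) (use opR cvR RX S_def in auto)
  have finS: "finite S" unfolding S_def by simp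
  have Rne: "R \<noteq> {}" using nonempty R_def by simp
  define N where "N = nerve (Inl ` S \<union> Inr ` S)
               (\<lambda>v. case v of Inl i \<Rightarrow> hplus w h i \<inter> R | Inr i \<Rightarrow> hminus w h i \<inter> R)"
  have U: "(case v of Inl i \<Rightarrow> hplus w h i \<inter> R | Inr i \<Rightarrow> hminus w h i \<inter> R) = half w h v \<inter> R" for v
    by (cases v) auto
  have inter: "(\<Inter>v\<in>G. half w h v \<inter> R) \<noteq> {} \<longleftrightarrow> R \<inter> (\<Inter>v\<in>G. half w h v) \<noteq> {}" for G
  proof (cases "G = {}")
    case True then show ?thesis using Rne by simp
  next
    case False
    then have "(\<Inter>v\<in>G. half w h v \<inter> R) = R \<inter> (\<Inter>v\<in>G. half w h v)" by auto
    then show ?thesis by simp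
  qed
  have NN: "N = Nv w h S R" unfolding N_def nerve_def Nv_def U using inter by simp
  have "collapsible N \<or> N = full_polar S"
  proof (cases "R \<inter> (\<Inter>i\<in>S. hyp w h i) = {}")
    case True
    then show ?thesis using main[OF finS stR True] NN by simp
  next
    case False
    then obtain p where p: "p \<in> R" "\<forall>i\<in>S. p \<in> hyp w h i" by blast
    have "N = full_polar S" unfolding NN
      using Nv_full full_in_Nv[OF finS stR p] by blast
    then show ?thesis by simp
  qed
  then show ?thesis using stR unfolding S_def R_def N_def Let_def by simp
qed

end
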